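(* Consider the single-element, single-slab periodic space-time SBP scheme: unknowns $\boldsymbol\rho,\boldsymbol g_1,\dots,\boldsymbol g_{n_v}\in\mathbb R^{(n_t+1)(n_x+1)}$ satisfying $$\mathsf D_t\boldsymbol\rho+\tilde{\mathsf D}_x\langle v\boldsymbol g\rangle=-\sigma_a\boldsymbol\rho-\mathsf H_t^{-1}\mathsf t_B\mathsf t_B^\top(\boldsymbol\rho-\boldsymbol\rho(0)),$$ $$\mathsf D_t\boldsymbol g_k+\tfrac{v_k}{\varepsilon}\tilde{\mathsf D}_x\boldsymbol g_k-\tfrac1\varepsilon\langle v\tilde{\mathsf D}_x\boldsymbol g\rangle+\tfrac{v_k}{\varepsilon^2}\tilde{\mathsf D}_x\boldsymbol\rho=-\Big(\tfrac{\sigma_s}{\varepsilon^2}+\sigma_a\Big)\boldsymbol g_k-\mathsf H_t^{-1}\mathsf t_B\mathsf t_B^\top(\boldsymbol g_k-\boldsymbol g_k(0)),\quad k=1,\dots,n_v,$$ where the initial data satisfy $\langle\boldsymbol g(0)\rangle=0$. Then every solution satisfies $\langle\boldsymbol g\rangle=\sum_{k=1}^{n_v}\omega_k\boldsymbol g_k=0$.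
   Context: SBP operators: on nodes $x_0<\dots<x_n$, a matrix $\bar{\mathsf D}$ is a degree-$p$ SBP approximation of $d/dx$ if $\bar{\mathsf D}\boldsymbol x^k=k\boldsymbol x^{k-1}$ for $0\le k\le p$ (with $\boldsymbol x^k$ the vector of $x_i^k$), $\bar{\mathsf D}=\bar{\mathsf H}^{-1}\bar{\mathsf Q}$ with $\bar{\mathsf H}$ symmetric positive definite (here always diagonal), and $\bar{\mathsf Q}+\bar{\mathsf Q}^\top=\bar{\mathsf E}=\bar{\boldsymbol t}_R\bar{\boldsymbol t}_R^\top-\bar{\boldsymbol t}_L\bar{\boldsymbol t}_L^\top=\mathrm{diag}(-1,0,\dots,0,1)$, $\bar{\boldsymbol t}_L=(1,0,\dots,0)^\top$, $\bar{\boldsymbol t}_R=(0,\dots,0,1)^\top$. Let $\bar{\mathsf D}_x=\bar{\mathsf H}_x^{-1}\bar{\mathsf Q}_x$ be such an operator on $n_x+1$ spatial nodes (boundary vectors $\bar{\boldsymbol t}_L,\bar{\boldsymbol t}_R$) and $\bar{\mathsf D}_t=\bar{\mathsf H}_t^{-1}\bar{\mathsf Q}_t$ one on $n_t+1$ temporal nodes, with boundary vectors $\bar{\boldsymbol t}_B=(1,0,\dots,0)^\top$, $\bar{\boldsymbol t}_T=(0,\dots,0,1)^\top$. With $\mathsf I_{n_x},\mathsf I_{n_t}$ identities of size $n_x+1,n_t+1$: $\mathsf D_t=\bar{\mathsf D}_t\otimes\mathsf I_{n_x}$, $\mathsf D_x=\mathsf I_{n_t}\otimes\bar{\mathsf D}_x$,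 $\mathsf H=\bar{\mathsf H}_t\otimes\bar{\mathsf H}_x$, $\mathsf Q_t=\bar{\mathsf Q}_t\otimes\bar{\mathsf H}_x$, $\mathsf H_t=\bar{\mathsf H}_t\otimes\mathsf I_{n_x}$, $\mathsf H_x=\mathsf I_{n_t}\otimes\bar{\mathsf H}_x$, $\mathsf t_R=\mathsf I_{n_t}\otimes\bar{\boldsymbol t}_R$, $\mathsf t_L=\mathsf I_{n_t}\otimes\bar{\boldsymbol t}_L$, $\mathsf t_B=\bar{\boldsymbol t}_B\otimes\mathsf I_{n_x}$, $\mathsf t_T=\bar{\boldsymbol t}_T\otimes\mathsf I_{n_x}$. The periodic operator is $\tilde{\mathsf D}_x=\mathsf D_x-\frac12\mathsf H_x^{-1}\big(\mathsf t_R(\mathsf t_R^\top-\mathsf t_L^\top)-\mathsf t_L(\mathsf t_L^\top-\mathsf t_R^\top)\big)$. Velocity discretization: nodes $v_1,\dots,v_{n_v}$ and weights $\omega_k$ with $\sum_k\omega_k=1$ and $\sum_k\omega_kv_k=0$; for vectors indexed by $k$, $\langle\boldsymbol a\rangle=\sum_k\omega_k\boldsymbol a_k$ (e.g. $\langle v\boldsymbol g\rangle=\sum_k\omega_kv_k\boldsymbol g_k$, $\langle v\tilde{\mathsf D}_x\boldsymbol g\rangle=\sum_k\omega_kv_k\tilde{\mathsf D}_x\boldsymbol g_k$). Parameters: $\varepsilon>0$, $\sigma_s>0$, $\sigma_a\ge0$. $\boldsymbol\rho(0),\boldsymbol g_k(0)$ are given vectors representing the initial data. *)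

theory Defs
  imports Main "HOL.Real"
begin

text \<open>A matrix on n+1 nodes is a function nat \<Rightarrow> nat \<Rightarrow> real, only the
entries with indices 0..n are relevant. A space-time vector in R^((n_t+1)(n_x+1)) is a
function on pairs (i,j) with i \<le> n_t (time node) and j \<le> n_x (space node); the pair
(i,j) corresponds to position i*(n_x+1)+j of the Kronecker ordering used in the paper
(time outer, space inner).\<close>

type_synonym mat = "nat \<Rightarrow> nat \<Rightarrow> real"
type_synonym stvec = "nat \<times> nat \<Rightarrow> real"

text \<open>E = t_R t_R^T - t_L t_L^T on n+1 nodes, t_L = e_0, t_R = e_n.\<close>
definition Ebd :: "nat \<Rightarrow> mat" where
  "Ebd n i j = (if i = n \<and> j = n then 1 else 0) - (if i = 0 \<and> j = 0 then 1 else 0)"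

definition is_SBP :: "nat \<Rightarrow> (nat \<Rightarrow> real) \<Rightarrow> nat \<Rightarrow> mat \<Rightarrow> mat \<Rightarrow> mat \<Rightarrow> bool" where
  "is_SBP n x p D H Q \<longleftrightarrow>
     (\<forall>i<n. x i < x (Suc i)) \<and>
     (\<forall>i\<le>n. \<forall>j\<le>n. i \<noteq> j \<longrightarrow> H i j = 0) \<and>
     (\<forall>i\<le>n. H i i > 0) \<and>
     (\<forall>i\<le>n. \<forall>j\<le>n. D i j = Q i j / H i i) \<and>
     (\<forall>i\<le>n. \<forall>j\<le>n. Q i j + Q j i = Ebd n i j) \<and>
     (\<forall>k\<le>p. \<forall>i\<le>n. (\<Sum>j\<le>n. D i j * x j ^ k) = real k * x i ^ (k - 1))"

definition Dt_op :: "nat \<Rightarrow> mat \<Rightarrow> stvec \<Rightarrow> stvec" where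
  "Dt_op nt Dtb u = (\<lambda>(i,j). \<Sum>i'\<le>nt. Dtb i i' * u (i',j))"

definition Dx_op :: "nat \<Rightarrow> mat \<Rightarrow> stvec \<Rightarrow> stvec" where
  "Dx_op nx Dxb u = (\<lambda>(i,j). \<Sum>j'\<le>nx. Dxb j j' * u (i,j'))"

text \<open>Periodic operator
  Dtilde_x = D_x - 1/2 H_x^{-1} (t_R (t_R^T - t_L^T) - t_L (t_L^T - t_R^T)),
  with H_x = I \<otimes> Hbar_x (diagonal), t_R = I \<otimes> e_{n_x}, t_L = I \<otimes> e_0.\<close>
definition Dxper_op :: "nat \<Rightarrow> mat \<Rightarrow> mat \<Rightarrow> stvec \<Rightarrow> stvec" where
  "Dxper_op nx Dxb Hxb u = (\<lambda>(i,j). Dx_op nx Dxb u (i,j)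
      - (1/2) * (1 / Hxb j j) *
        ((if j = nx then u (i,nx) - u (i,0) else 0)
         - (if j = 0 then u (i,0) - u (i,nx) else 0)))"

text \<open>SAT term H_t^{-1} t_B t_B^T w with H_t = Hbar_t \<otimes> I, t_B = e_0 \<otimes> I.\<close>
definition SATB_op :: "mat \<Rightarrow> stvec \<Rightarrow> stvec" where
  "SATB_op Htb w = (\<lambda>(i,j). if i = 0 then w (0,j) / Htb 0 0 else 0)"

end

theory Submission
  imports Defs Complex_Main
begin

lemma energy:
  fixes D H Q :: mat and y :: "nat \<Rightarrow> real" and c :: real
  assumes Hp: "\<forall>i\<le>n. H i i > 0"
    and DQ: "\<forall>i\<le>n. \<forall>j\<le>n. D i j = Q i j / H i i"
    and QE: "\<forall>i\<le>n. \<forall>j\<le>n. Q i j + Q j i = Ebd n i j"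
    and c: "c > 0"
    and eq: "\<forall>i\<le>n. (\<Sum>j\<le>n. D i j * y j) + c * y i + (if i = 0 then y 0 / H 0 0 else 0) = 0"
  shows "\<forall>i\<le>n. y i = 0"
proof -
  define W where "W = (\<Sum>i\<le>n. \<Sum>j\<le>n. Q i j * y i * y j)"
  have W2: "2 * W = (\<Sum>i\<le>n. \<Sum>j\<le>n. Ebd n i j * y i * y j)"
  proof -
    have "W = (\<Sum>i\<le>n. \<Sum>j\<le>n. Q j i * y i * y j)"
      unfolding W_def by (subst sum.swap) (simp add: mult.commute mult.left_commute)
    hence "2 * W = (\<Sum>i\<le>n. \<Sum>j\<le>n. Q i j * y i * y j) + (\<Sum>i\<le>n. \<Sum>j\<le>n. Q j i * y i * y j)"
      unfolding W_def by simp
    also have "\<dots> = (\<Sum>i\<le>n. \<Sum>j\<le>n. (Q i j + Q j i) * y i * y j)"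
      by (simp add: sum.distrib[symmetric] algebra_simps)
    also have "\<dots> = (\<Sum>i\<le>n. \<Sum>j\<le>n. Ebd n i j * y i * y j)"
      using QE by (intro sum.cong refl) auto
    finally show ?thesis .
  qed
  have Ev: "(\<Sum>i\<le>n. \<Sum>j\<le>n. Ebd n i j * y i * y j) = y n ^ 2 - y 0 ^ 2"
  proof -
    have "(\<Sum>i\<le>n. \<Sum>j\<le>n. Ebd n i j * y i * y j)
       = (\<Sum>i\<le>n. (if i = n then (\<Sum>j\<le>n. if j = n then y n * y n else 0) else 0)
                 - (if i = 0 then (\<Sum>j\<le>n. if j = 0 then y 0 * y 0 else 0) else 0))"
    proof (intro sum.cong refl)
      fix i assume "i \<in> {..n}"
      have "(\<Sum>j\<le>n. Ebd n i j * y i * y j) = (\<Sum>j\<le>n. (if i = n then (if j = n then y n * y n else 0) else 0)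
                 - (if i = 0 then (if j = 0 then y 0 * y 0 else 0) else 0))"
        by (intro sum.cong refl) (auto simp: Ebd_def)
      also have "\<dots> = (if i = n then (\<Sum>j\<le>n. if j = n then y n * y n else 0) else 0)
                 - (if i = 0 then (\<Sum>j\<le>n. if j = 0 then y 0 * y 0 else 0) else 0)"
        by (simp add: sum_subtractf)
      finally show "(\<Sum>j\<le>n. Ebd n i j * y i * y j) = (if i = n then (\<Sum>j\<le>n. if j = n then y n * y n else 0) else 0)
                 - (if i = 0 then (\<Sum>j\<le>n. if j = 0 then y 0 * y 0 else 0) else 0)" .
    qed
    also have "\<dots> = y n * y n - y 0 * y 0"
      by (simp add: sum_subtractf)
    finally show ?thesis by (simp add: power2_eq_square)
  qed
  have "0 = (\<Sum>i\<le>n. H i i * y i * ((\<Sum>j\<le>n. D i j * y j) + c * y i + (if i = 0 then y 0 / H 0 0 else 0)))"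
    using eq by simp
  also have "\<dots> = (\<Sum>i\<le>n. (\<Sum>j\<le>n. Q i j * y i * y j) + c * (H i i * y i ^ 2) + (if i = 0 then y 0 ^ 2 else 0))"
  proof (intro sum.cong refl)
    fix i assume i: "i \<in> {..n}"
    have "H i i * y i * (\<Sum>j\<le>n. D i j * y j) = (\<Sum>j\<le>n. Q i j * y i * y j)"
      unfolding sum_distrib_left
      using DQ Hp i by (intro sum.cong refl) (auto simp: field_simps)
    moreover have "i = 0 \<Longrightarrow> H i i * y i * (y 0 / H 0 0) = y 0 ^ 2"
      using Hp by (auto simp: power2_eq_square field_simps)
    ultimately show "H i i * y i * ((\<Sum>j\<le>n. D i j * y j) + c * y i + (if i = 0 then y 0 / H 0 0 else 0))
      = (\<Sum>j\<le>n. Q i j * y i * y j) + c * (H i i * y i ^ 2) + (if i = 0 then y 0 ^ 2 else 0)"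
      by (auto simp: algebra_simps power2_eq_square)
  qed
  also have "\<dots> = W + c * (\<Sum>i\<le>n. H i i * y i ^ 2) + y 0 ^ 2"
    by (simp add: sum.distrib W_def sum_distrib_left)
  finally have "0 = W + c * (\<Sum>i\<le>n. H i i * y i ^ 2) + y 0 ^ 2" .
  have tot: "0 = (y n ^ 2 - y 0 ^ 2) / 2 + c * (\<Sum>i\<le>n. H i i * y i ^ 2) + y 0 ^ 2"
  proof -
    have "W = ((y n)^2 - (y 0)^2) / 2" using W2 Ev by simp
    thus ?thesis using \<open>0 = W + c * (\<Sum>i\<le>n. H i i * y i ^ 2) + y 0 ^ 2\<close> by linarith
  qed
  have nn: "\<forall>i\<in>{..n}. 0 \<le> H i i * y i ^ 2" using Hp by (simp add: less_imp_le)
  have S0: "0 \<le> (\<Sum>i\<le>n. H i i * y i ^ 2)" using nn by (intro sum_nonneg) auto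
  have "c * (\<Sum>i\<le>n. H i i * y i ^ 2) \<le> 0"
  proof -
    have "0 \<le> (y n)^2" "0 \<le> (y 0)^2" by simp_all
    moreover have "\<And>a b S :: real. 0 = (a - b)/2 + S + b \<Longrightarrow> 0 \<le> a \<Longrightarrow> 0 \<le> b \<Longrightarrow> S \<le> 0" by (simp add: field_simps)
    ultimately show ?thesis using tot by blast
  qed
  hence "(\<Sum>i\<le>n. H i i * y i ^ 2) = 0"
    using S0 c by (metis antisym mult_pos_pos not_le)
  hence "\<forall>i\<in>{..n}. H i i * y i ^ 2 = 0" using nn sum_nonneg_eq_0_iff[of "{..n}" "\<lambda>i. H i i * y i ^ 2"] by simp
  thus ?thesis using Hp by (metis atMost_iff less_irrefl mult_eq_0_iff zero_eq_power2)
qed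

theorem theorem3p2:
  fixes nx nt px pt nv :: nat
    and xs ts :: "nat \<Rightarrow> real"
    and Dxb Hxb Qxb Dtb Htb Qtb :: mat
    and v \<omega> :: "nat \<Rightarrow> real"
    and \<epsilon> \<sigma>s \<sigma>a :: real
    and \<rho> \<rho>0 :: stvec
    and g g0 :: "nat \<Rightarrow> stvec"
  assumes sbp_x: "is_SBP nx xs px Dxb Hxb Qxb"
    and sbp_t: "is_SBP nt ts pt Dtb Htb Qtb"
    and w_sum: "(\<Sum>k=1..nv. \<omega> k) = 1"
    and w_mom: "(\<Sum>k=1..nv. \<omega> k * v k) = 0"
    and eps: "\<epsilon> > 0" and sig_s: "\<sigma>s > 0" and sig_a: "\<sigma>a \<ge> 0"
    and init: "\<forall>i\<le>nt. \<forall>j\<le>nx. (\<Sum>k=1..nv. \<omega> k * g0 k (i,j)) = 0"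
    and eq_rho: "\<forall>i\<le>nt. \<forall>j\<le>nx.
        Dt_op nt Dtb \<rho> (i,j)
        + Dxper_op nx Dxb Hxb (\<lambda>p. \<Sum>k=1..nv. \<omega> k * v k * g k p) (i,j)
        = - \<sigma>a * \<rho> (i,j) - SATB_op Htb (\<lambda>p. \<rho> p - \<rho>0 p) (i,j)"
    and eq_g: "\<forall>k\<in>{1..nv}. \<forall>i\<le>nt. \<forall>j\<le>nx.
        Dt_op nt Dtb (g k) (i,j)
        + v k / \<epsilon> * Dxper_op nx Dxb Hxb (g k) (i,j)
        - 1 / \<epsilon> * (\<Sum>l=1..nv. \<omega> l * v l * Dxper_op nx Dxb Hxb (g l) (i,j))
        + v k / \<epsilon>\<^sup>2 * Dxper_op nx Dxb Hxb \<rho> (i,j)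
        = - (\<sigma>s / \<epsilon>\<^sup>2 + \<sigma>a) * g k (i,j)
          - SATB_op Htb (\<lambda>p. g k p - g0 k p) (i,j)"
  shows "\<forall>i\<le>nt. \<forall>j\<le>nx. (\<Sum>k=1..nv. \<omega> k * g k (i,j)) = 0"
proof (intro allI impI)
  fix i j assume i: "i \<le> nt" and j: "j \<le> nx"
  define G where "G = (\<lambda>p. \<Sum>k=1..nv. \<omega> k * g k p)"
  define c where "c = \<sigma>s / \<epsilon>\<^sup>2 + \<sigma>a"
  have c: "c > 0" using eps sig_s sig_a unfolding c_def by (simp add: add_pos_nonneg)
  have key: "\<forall>i\<le>nt. (\<Sum>i'\<le>nt. Dtb i i' * G (i', j)) + c * G (i, j)
      + (if i = 0 then G (0, j) / Htb 0 0 else 0) = 0"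
  proof (intro allI impI)
    fix i assume i: "i \<le> nt"
    define A where "A k = Dt_op nt Dtb (g k) (i,j)" for k
    define B where "B k = Dxper_op nx Dxb Hxb (g k) (i,j)" for k
    define S where "S = (\<Sum>l=1..nv. \<omega> l * v l * B l)"
    define R where "R = Dxper_op nx Dxb Hxb \<rho> (i,j)"
    define T where "T k = SATB_op Htb (\<lambda>p. g k p - g0 k p) (i,j)" for k
    have ek: "\<forall>k\<in>{1..nv}. A k + v k / \<epsilon> * B k - 1 / \<epsilon> * S + v k / \<epsilon>\<^sup>2 * R = - c * g k (i,j) - T k"
      using eq_g i j unfolding A_def B_def S_def R_def T_def c_def by blast
    hence "(\<Sum>k=1..nv. \<omega> k * (A k + v k / \<epsilon> * B k - 1 / \<epsilon> * S + v k / \<epsilon>\<^sup>2 * R))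
        = (\<Sum>k=1..nv. \<omega> k * (- c * g k (i,j) - T k))" by (intro sum.cong) auto
    moreover have "(\<Sum>k=1..nv. \<omega> k * (A k + v k / \<epsilon> * B k - 1 / \<epsilon> * S + v k / \<epsilon>\<^sup>2 * R))
        = (\<Sum>k=1..nv. \<omega> k * A k) + 1 / \<epsilon> * (\<Sum>k=1..nv. \<omega> k * v k * B k)
          - 1 / \<epsilon> * S * (\<Sum>k=1..nv. \<omega> k) + R / \<epsilon>\<^sup>2 * (\<Sum>k=1..nv. \<omega> k * v k)"
      by (simp add: sum.distrib sum_subtractf sum_distrib_left sum_distrib_right algebra_simps)
    moreover have "(\<Sum>k=1..nv. \<omega> k * (- c * g k (i,j) - T k))
        = - c * G (i,j) - (\<Sum>k=1..nv. \<omega> k * T k)"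
      unfolding G_def by (simp add: sum_subtractf sum_distrib_left algebra_simps)
    moreover have "(\<Sum>k=1..nv. \<omega> k * T k) = (if i = 0 then G (0, j) / Htb 0 0 else 0)"
    proof -
      have "(\<Sum>k=1..nv. \<omega> k * T k) = (if i = 0 then (G (0,j) - (\<Sum>k=1..nv. \<omega> k * g0 k (0,j))) / Htb 0 0 else 0)"
        unfolding T_def SATB_op_def G_def
        by (simp add: sum_subtractf sum_divide_distrib[symmetric] right_diff_distrib)
      thus ?thesis using init j by simp
    qed
    moreover have "(\<Sum>k=1..nv. \<omega> k * A k) = (\<Sum>i'\<le>nt. Dtb i i' * G (i', j))"
      unfolding A_def Dt_op_def G_def
      by (simp add: sum_distrib_left algebra_simps) (rule sum.swap)
    ultimately show "(\<Sum>i'\<le>nt. Dtb i i' * G (i', j)) + c * G (i, j)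
      + (if i = 0 then G (0, j) / Htb 0 0 else 0) = 0"
      using w_sum w_mom unfolding S_def by simp
  qed
  have "\<forall>i\<le>nt. G (i, j) = 0"
    apply (rule energy[where D=Dtb and H=Htb and Q=Qtb and c=c])
    using sbp_t c key unfolding is_SBP_def by auto
  thus "(\<Sum>k=1..nv. \<omega> k * g k (i,j)) = 0" using i unfolding G_def by simp
qed

end
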